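(* Let $A\subseteq[n]$ be nonempty. There is a bijection $\rho$ from the set of rooted trees on $A$ in which $\max(A)$ is a leaf to the set of ordered forests on $A\setminus\{\max(A)\}$.
   Context: A rooted tree on a finite set $A$ is a tree with vertex set $A$ and a distinguished vertex (the root); a leaf is a vertex with no children (children being taken with respect to the root). An ordered forest on a finite set $X$ is a tuple of rooted trees whose vertex sets form a partition of $X$ (the empty tuple when $X=\emptyset$). *)

theory Defs
  imports Main
begin

definition adj :: "'a set set \<Rightarrow> 'a \<Rightarrow> 'a \<Rightarrow> bool" where
  "adj E x y \<longleftrightarrow> {x, y} \<in> E \<and> x \<noteq> y"

definition graph_on :: "'a set \<Rightarrow> 'a set set \<Rightarrow> bool" where
  "graph_on V E \<longleftrightarrow> (\<forall>e\<in>E. \<exists>x y. x \<in> V \<and> y \<in> V \<and> x \<noteq> y \<and> e = {x, y})"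

definition connected_in :: "'a set \<Rightarrow> 'a set set \<Rightarrow> 'a \<Rightarrow> 'a \<Rightarrow> bool" where
  "connected_in V E x y \<longleftrightarrow> (x, y) \<in> {(u, v). u \<in> V \<and> v \<in> V \<and> adj E u v}\<^sup>*"

definition connected_graph :: "'a set \<Rightarrow> 'a set set \<Rightarrow> bool" where
  "connected_graph V E \<longleftrightarrow> (\<forall>x\<in>V. \<forall>y\<in>V. connected_in V E x y)"

definition is_cycle :: "'a set set \<Rightarrow> 'a list \<Rightarrow> bool" where
  "is_cycle E vs \<longleftrightarrow> length vs \<ge> 3 \<and> distinct vs \<and>
     (\<forall>i. Suc i < length vs \<longrightarrow> adj E (vs ! i) (vs ! Suc i)) \<and>
     adj E (last vs) (hd vs)"

definition acyclic_graph :: "'a set set \<Rightarrow> bool" where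
  "acyclic_graph E \<longleftrightarrow> \<not> (\<exists>vs. is_cycle E vs)"

definition is_tree :: "'a set \<Rightarrow> 'a set set \<Rightarrow> bool" where
  "is_tree V E \<longleftrightarrow> finite V \<and> V \<noteq> {} \<and> graph_on V E \<and> connected_graph V E \<and> acyclic_graph E"

definition rooted_tree :: "'a set \<Rightarrow> 'a \<Rightarrow> 'a set set \<Rightarrow> bool" where
  "rooted_tree V r E \<longleftrightarrow> is_tree V E \<and> r \<in> V"

text \<open>u is a child of v (w.r.t. root r): u and v are adjacent and v is the parent of u,
  i.e. after deleting the edge {u,v}, u is no longer connected to the root.\<close>
definition is_child :: "'a set \<Rightarrow> 'a \<Rightarrow> 'a set set \<Rightarrow> 'a \<Rightarrow> 'a \<Rightarrow> bool" where
  "is_child V r E u v \<longleftrightarrow> adj E u v \<and> \<not> connected_in V (E - {{u, v}}) u r"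

definition is_leaf :: "'a set \<Rightarrow> 'a \<Rightarrow> 'a set set \<Rightarrow> 'a \<Rightarrow> bool" where
  "is_leaf V r E v \<longleftrightarrow> v \<in> V \<and> \<not> (\<exists>u\<in>V. is_child V r E u v)"

definition rooted_trees_leaf :: "'a set \<Rightarrow> 'a \<Rightarrow> ('a \<times> 'a set set) set" where
  "rooted_trees_leaf A a = {(r, E). rooted_tree A r E \<and> is_leaf A r E a}"

definition ordered_forest :: "'a set \<Rightarrow> ('a set \<times> 'a \<times> 'a set set) list \<Rightarrow> bool" where
  "ordered_forest X F \<longleftrightarrow>
     (\<forall>(V, r, E) \<in> set F. rooted_tree V r E) \<and>
     (\<forall>i j. i < length F \<longrightarrow> j < length F \<longrightarrow> i \<noteq> j \<longrightarrow> fst (F ! i) \<inter> fst (F ! j) = {}) \<and>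
     (\<Union>T\<in>set F. fst T) = X"

definition ordered_forests :: "'a set \<Rightarrow> ('a set \<times> 'a \<times> 'a set set) list set" where
  "ordered_forests X = {F. ordered_forest X F}"

end

theory Submission
  imports Defs "HOL-Library.Transitive_Closure_Table"
begin



lemma adj_sym: "adj E x y \<Longrightarrow> adj E y x"
  unfolding adj_def by (auto simp: insert_commute)

lemma adj_mono: "adj E x y \<Longrightarrow> E \<subseteq> E' \<Longrightarrow> adj E' x y"
  unfolding adj_def by auto

lemma conn_refl[simp]: "connected_in V E x x"
  unfolding connected_in_def by simp

lemma conn_mono: "connected_in V E x y \<Longrightarrow> V \<subseteq> V' \<Longrightarrow> E \<subseteq> E' \<Longrightarrow> connected_in V' E' x y"
  unfolding connected_in_def
  by (erule rtrancl_mono[THEN subsetD, rotated]) (auto intro: adj_mono)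

lemma conn_step: "connected_in V E x y \<Longrightarrow> y \<in> V \<Longrightarrow> z \<in> V \<Longrightarrow> adj E y z \<Longrightarrow> connected_in V E x z"
  unfolding connected_in_def by (erule rtrancl_into_rtrancl) auto

lemma conn_trans: "connected_in V E x y \<Longrightarrow> connected_in V E y z \<Longrightarrow> connected_in V E x z"
  unfolding connected_in_def by (rule rtrancl_trans)

lemma conn_sym: "connected_in V E x y \<Longrightarrow> connected_in V E y x"
  unfolding connected_in_def
proof (induction rule: rtrancl_induct)
  case base then show ?case by simp
next
  case (step b c)
  then have "(c,b) \<in> {(u, v). u \<in> V \<and> v \<in> V \<and> adj E u v}" by (auto intro: adj_sym)
  then show ?case using step(3) by (rule converse_rtrancl_into_rtrancl)
qed

lemma conn_edge: "x \<in> V \<Longrightarrow> y \<in> V \<Longrightarrow> adj E x y \<Longrightarrow> connected_in V E x y"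
  using conn_step[of V E x x y] by simp

lemma conn_mem: "connected_in V E x y \<Longrightarrow> x \<noteq> y \<Longrightarrow> x \<in> V \<and> y \<in> V"
  unfolding connected_in_def by (induction rule: rtrancl_induct) auto

lemma conn_first: "connected_in V E x y \<Longrightarrow> x \<noteq> y \<Longrightarrow> \<exists>q\<in>V. adj E x q"
  unfolding connected_in_def by (erule converse_rtranclE) auto

lemma graph_adj: "graph_on V E \<Longrightarrow> adj E x y \<Longrightarrow> x \<in> V \<and> y \<in> V"
  unfolding graph_on_def adj_def by (fastforce simp: doubleton_eq_iff)

lemma acyclic_mono: "acyclic_graph E \<Longrightarrow> E' \<subseteq> E \<Longrightarrow> acyclic_graph E'"
  unfolding acyclic_graph_def is_cycle_def by (meson adj_mono)

definition bridges :: "'a set \<Rightarrow> 'a set set \<Rightarrow> bool" where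
  "bridges V E \<longleftrightarrow> (\<forall>u v. adj E u v \<longrightarrow> \<not> connected_in V (E - {{u,v}}) u v)"

lemma path_nth: "rtrancl_path r x xs y \<Longrightarrow> Suc i < length (x#xs) \<Longrightarrow> r ((x#xs)!i) ((x#xs)!Suc i)"
proof (induction arbitrary: i rule: rtrancl_path.induct)
  case (base x) then show ?case by simp
next
  case (step x y ys z)
  then show ?case by (cases i) auto
qed

lemma path_last: "rtrancl_path r x xs y \<Longrightarrow> last (x#xs) = y"
  by (induction rule: rtrancl_path.induct) auto

lemma acyclic_bridges:
  assumes g: "graph_on V E" and a: "acyclic_graph E"
  shows "bridges V E"
  unfolding bridges_def
proof (intro allI impI notI)
  fix u v assume uv: "adj E u v" and c: "connected_in V (E - {{u, v}}) u v"
  let ?R = "\<lambda>x y. (x,y) \<in> {(u', v'). u' \<in> V \<and> v' \<in> V \<and> adj (E - {{u, v}}) u' v'}"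
  from c have "?R\<^sup>*\<^sup>* u v" unfolding connected_in_def by (simp add: rtranclp_rtrancl_eq)
  then obtain xs where "rtrancl_path ?R u xs v" by (auto simp: rtranclp_eq_rtrancl_path)
  then obtain ys where p: "rtrancl_path ?R u ys v" and d: "distinct (u # ys)"
    by (rule rtrancl_path_distinct)
  have uv': "u \<noteq> v" using uv by (simp add: adj_def)
  have l: "last (u#ys) = v" using path_last[OF p] .
  have st: "\<And>i. Suc i < length (u#ys) \<Longrightarrow> adj (E - {{u,v}}) ((u#ys)!i) ((u#ys)!Suc i)"
    using path_nth[OF p] by auto
  have l0: "length ys \<noteq> 0" using l uv' by auto
  have l1: "length ys \<noteq> 1"
  proof
    assume "length ys = 1"
    then obtain w where "ys = [w]" by (cases ys) auto
    then show False using st[of 0] l by (auto simp: adj_def)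
  qed
  have "length (u#ys) \<ge> 3" using l0 l1 by (simp only: length_Cons)
  moreover have "adj E (last (u#ys)) (hd (u#ys))" using l uv by (simp add: adj_sym)
  moreover have "\<forall>i. Suc i < length (u#ys) \<longrightarrow> adj E ((u#ys)!i) ((u#ys)!Suc i)"
    using st by (meson Diff_subset adj_mono)
  ultimately have "is_cycle E (u#ys)" using d unfolding is_cycle_def by blast
  then show False using a unfolding acyclic_graph_def by blast
qed

lemma bridges_acyclic:
  assumes g: "graph_on V E" and b: "bridges V E"
  shows "acyclic_graph E"
  unfolding acyclic_graph_def
proof
  assume "\<exists>vs. is_cycle E vs"
  then obtain vs where c: "is_cycle E vs" by blast
  define n where "n = length vs"
  define x where "x = vs ! (n - 1)"
  define y where "y = vs ! 0"
  have vne: "vs \<noteq> []" using c unfolding is_cycle_def by auto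
  have n3: "n \<ge> 3" and d: "distinct vs" and st: "\<And>i. Suc i < n \<Longrightarrow> adj E (vs!i) (vs!Suc i)"
    and xy: "adj E x y"
    using c vne unfolding is_cycle_def n_def x_def y_def
    by (auto simp: last_conv_nth hd_conv_nth)
  have "\<And>k. k < n \<Longrightarrow> connected_in V (E - {{x,y}}) y (vs!k)"
  proof -
    fix k show "k < n \<Longrightarrow> connected_in V (E - {{x,y}}) y (vs!k)"
    proof (induction k)
      case 0 then show ?case by (simp add: y_def)
    next
      case (Suc k)
      have a: "adj E (vs!k) (vs!Suc k)" using st Suc by simp
      have ne: "{vs!k, vs!Suc k} \<noteq> {x,y}"
      proof
        assume eq: "{vs!k, vs!Suc k} = {x,y}"
        have i1: "vs!k = vs!(n-1) \<Longrightarrow> k = n - 1" using d Suc n3 by (simp add: nth_eq_iff_index_eq n_def)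
        have i2: "vs!k = vs!0 \<Longrightarrow> k = 0" using d Suc n3 nth_eq_iff_index_eq[of vs k 0] by (fastforce simp add: n_def)
        have i3: "vs!Suc k = vs!(n-1) \<Longrightarrow> Suc k = n - 1" using d Suc n3 by (simp add: nth_eq_iff_index_eq n_def)
        from eq have "(vs!k = x \<and> vs!Suc k = y) \<or> (vs!k = y \<and> vs!Suc k = x)"
          by (auto simp: doubleton_eq_iff)
        then show False using i1 i2 i3 Suc n3 unfolding x_def y_def by auto
      qed
      have "adj (E - {{x,y}}) (vs!k) (vs!Suc k)" using a ne by (auto simp: adj_def)
      moreover have "vs!k \<in> V" "vs!Suc k \<in> V" using graph_adj[OF g a] by auto
      ultimately show ?case using Suc by (auto intro: conn_step)
    qed
  qed
  from this[of "n-1"] n3 have "connected_in V (E - {{x,y}}) y x" by (simp add: x_def)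
  then have "connected_in V (E - {{x,y}}) x y" by (rule conn_sym)
  then show False using b xy unfolding bridges_def by blast
qed

lemma acyclic_iff_bridges: "graph_on V E \<Longrightarrow> acyclic_graph E \<longleftrightarrow> bridges V E"
  using acyclic_bridges bridges_acyclic by blast



lemma tree_bridges: "is_tree V E \<Longrightarrow> bridges V E"
  unfolding is_tree_def using acyclic_bridges by blast

lemma conn_restrict:
  assumes "connected_in X F a b"
  shows "connected_in {w\<in>X. connected_in X F a w} {f\<in>F. f \<subseteq> {w\<in>X. connected_in X F a w}} a b"
  using assms unfolding connected_in_def
proof (induction rule: rtrancl_induct)
  case base then show ?case by simp
next
  case (step b c)
  let ?C = "{w\<in>X. (a, w) \<in> {(u, v). u \<in> X \<and> v \<in> X \<and> adj F u v}\<^sup>*}"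
  have bC: "b \<in> ?C" using step by auto
  have cC: "c \<in> ?C" using step by (auto intro: rtrancl_into_rtrancl)
  have "{b,c} \<in> F" using step by (auto simp: adj_def)
  then have "adj {f\<in>F. f \<subseteq> ?C} b c" using step bC cC by (auto simp: adj_def)
  then show ?case using step bC cC unfolding connected_in_def
    by (auto elim!: rtrancl_into_rtrancl)
qed

lemma conn_side:
  assumes g1: "graph_on V1 E1" and g2: "graph_on V2 E2" and d: "V1 \<inter> V2 = {}"
    and c: "connected_in V (E1 \<union> E2) a b" and a: "a \<in> V1"
  shows "b \<in> V1"
  using c a unfolding connected_in_def
proof (induction rule: rtrancl_induct)
  case base then show ?case by simp
next
  case (step b c)
  then have bV: "b \<in> V1" and ad: "adj (E1 \<union> E2) b c" by auto
  show ?case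
  proof (cases "{b,c} \<in> E1")
    case True then show ?thesis using graph_adj[OF g1, of b c] ad by (auto simp: adj_def)
  next
    case False
    then have "adj E2 b c" using ad by (auto simp: adj_def)
    then show ?thesis using graph_adj[OF g2, of b c] bV d by auto
  qed
qed




lemma join_bridge_left:
  assumes t1: "is_tree V1 E1" and t2: "is_tree V2 E2" and d: "V1 \<inter> V2 = {}"
    and x: "x \<in> V1" and y: "y \<in> V2" and e: "{u,v} \<in> E1" and uv: "u \<noteq> v"
  shows "\<not> connected_in (V1 \<union> V2) (E1 \<union> E2 \<union> {{x,y}} - {{u,v}}) u v"
proof
  assume c: "connected_in (V1 \<union> V2) (E1 \<union> E2 \<union> {{x,y}} - {{u,v}}) u v"
  have g1: "graph_on V1 E1" and g2: "graph_on V2 E2" using t1 t2 unfolding is_tree_def by auto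
  have uvV: "u \<in> V1" "v \<in> V1" using graph_adj[OF g1, of u v] e uv by (auto simp: adj_def)
  define \<phi> where "\<phi> w = (if w \<in> V1 then w else x)" for w
  have gen: "(\<phi> a, \<phi> z) \<in> ({(u', v'). u' \<in> V1 \<and> v' \<in> V1 \<and> adj (E1 - {{u,v}}) u' v'})\<^sup>*"
    if "(a, z) \<in> {(u', v'). u' \<in> V1 \<union> V2 \<and> v' \<in> V1 \<union> V2 \<and> adj (E1 \<union> E2 \<union> {{x,y}} - {{u,v}}) u' v'}\<^sup>*" for a z
    using that
  proof (induction rule: rtrancl_induct)
    case base then show ?case by simp
  next
    case (step b c)
    then have bc: "b \<in> V1 \<union> V2" "c \<in> V1 \<union> V2" and ad: "adj (E1 \<union> E2 \<union> {{x,y}} - {{u,v}}) b c" by auto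
    have "(\<phi> b, \<phi> c) \<in> ({(u', v'). u' \<in> V1 \<and> v' \<in> V1 \<and> adj (E1 - {{u,v}}) u' v'})\<^sup>="
    proof -
      have ne: "{b,c} \<noteq> {u,v}" and bcne: "b \<noteq> c" and mem: "{b,c} \<in> E1 \<or> {b,c} \<in> E2 \<or> {b,c} = {x,y}"
        using ad by (auto simp: adj_def)
      show ?thesis
      proof (cases "{b,c} \<in> E1")
        case True
        then have "b \<in> V1" "c \<in> V1" using graph_adj[OF g1, of b c] bcne by (auto simp: adj_def)
        then show ?thesis using True ne bcne by (auto simp: \<phi>_def adj_def)
      next
        case F1: False
        show ?thesis
        proof (cases "{b,c} \<in> E2")
          case True
          then have "b \<in> V2" "c \<in> V2" using graph_adj[OF g2, of b c] bcne by (auto simp: adj_def)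
          then have "b \<notin> V1" "c \<notin> V1" using d by auto
          then show ?thesis by (simp add: \<phi>_def)
        next
          case False
          then have "{b,c} = {x,y}" using mem F1 by auto
          then have "(b = x \<and> c = y) \<or> (b = y \<and> c = x)" by (auto simp: doubleton_eq_iff)
          moreover have "y \<notin> V1" using y d by auto
          ultimately show ?thesis using x by (auto simp: \<phi>_def)
        qed
      qed
    qed
    then show ?case using step(3) by (auto elim: rtrancl_into_rtrancl)
  qed
  have "connected_in V1 (E1 - {{u,v}}) u v" using gen[of u v] c uvV unfolding connected_in_def by (simp add: \<phi>_def)
  moreover have "adj E1 u v" using e uv by (simp add: adj_def)
  ultimately show False using tree_bridges[OF t1] unfolding bridges_def by blast
qed




lemma neighbor_exists:
  assumes t: "is_tree X E" and c: "connected_in X E w r" and wr: "w \<noteq> r"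
  shows "\<exists>v. adj E r v \<and> \<not> connected_in X (E - {{r,v}}) w r"
proof -
  have b: "bridges X E" using tree_bridges[OF t] .
  have "(w, r) \<in> {(u, v). u \<in> X \<and> v \<in> X \<and> adj E u v}\<^sup>*" using c unfolding connected_in_def .
  then show ?thesis using wr
  proof (induction rule: converse_rtrancl_induct)
    case base then show ?case by simp
  next
    case (step w w')
    have ww: "w \<in> X" "w' \<in> X" "adj E w w'" using step.hyps(1) by auto
    have wr: "w \<noteq> r" by fact
    show ?case
    proof (cases "w' = r")
      case True
      then have "\<not> connected_in X (E - {{w,r}}) w r" using b ww unfolding bridges_def by blast
      moreover have "{w,r} = {r,w}" by blast
      moreover have "adj E r w" using adj_sym[OF ww(3)] True by simp
      ultimately show ?thesis by metis
    next
      case False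
      then obtain v where v: "adj E r v" "\<not> connected_in X (E - {{r,v}}) w' r" using step.IH by blast
      have "\<not> connected_in X (E - {{r,v}}) w r"
      proof
        assume cw: "connected_in X (E - {{r,v}}) w r"
        show False
        proof (cases "{w,w'} = {r,v}")
          case True
          then have "w = r \<or> w' = r" by (simp add: doubleton_eq_iff) blast
          then show False using wr False by blast
        next
          case ne: False
          have "{w',w} = {w,w'}" by blast
          then have "adj (E - {{r,v}}) w' w" using ww ne unfolding adj_def by auto
          then have "connected_in X (E - {{r,v}}) w' w" using ww by (simp add: conn_edge)
          then have "connected_in X (E - {{r,v}}) w' r" using cw by (rule conn_trans)
          then show False using v(2) by blast
        qed
      qed
      then show ?thesis using v by blast
    qed
  qed
qed




lemma join_tree:
  assumes t1: "is_tree V1 E1" and t2: "is_tree V2 E2" and d: "V1 \<inter> V2 = {}"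
    and x: "x \<in> V1" and y: "y \<in> V2"
  shows "is_tree (V1 \<union> V2) (E1 \<union> E2 \<union> {{x,y}})"
proof -
  let ?V = "V1 \<union> V2" and ?E = "E1 \<union> E2 \<union> {{x,y}}"
  have g1: "graph_on V1 E1" and g2: "graph_on V2 E2" using t1 t2 unfolding is_tree_def by auto
  have xy: "x \<noteq> y" using x y d by auto
  have g: "graph_on ?V ?E" unfolding graph_on_def
  proof
    fix e assume "e \<in> ?E"
    then consider "e \<in> E1" | "e \<in> E2" | "e = {x,y}" by blast
    then show "\<exists>a b. a \<in> ?V \<and> b \<in> ?V \<and> a \<noteq> b \<and> e = {a, b}"
    proof cases
      case 1
      then obtain a b where "a\<in>V1" "b\<in>V1" "a\<noteq>b" "e={a,b}" using g1 unfolding graph_on_def by meson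
      then show ?thesis by blast
    next
      case 2
      then obtain a b where "a\<in>V2" "b\<in>V2" "a\<noteq>b" "e={a,b}" using g2 unfolding graph_on_def by meson
      then show ?thesis by blast
    next
      case 3 then show ?thesis using x y xy by blast
    qed
  qed
  have cx: "connected_in ?V ?E w x" if w: "w \<in> ?V" for w
  proof (cases "w \<in> V1")
    case True
    then have "connected_in V1 E1 w x" using t1 x unfolding is_tree_def connected_graph_def by blast
    then show ?thesis by (rule conn_mono) auto
  next
    case False
    then have "w \<in> V2" using w by auto
    then have "connected_in V2 E2 w y" using t2 y unfolding is_tree_def connected_graph_def by blast
    then have "connected_in ?V ?E w y" by (rule conn_mono) auto
    moreover have "adj ?E y x" using xy by (auto simp: adj_def insert_commute)
    ultimately show ?thesis using x y by (auto intro: conn_step)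
  qed
  have conn: "connected_graph ?V ?E"
    unfolding connected_graph_def using cx by (meson conn_sym conn_trans)
  have b: "bridges ?V ?E"
    unfolding bridges_def
  proof (intro allI impI)
    fix u v assume ad: "adj ?E u v"
    then have uv: "u \<noteq> v" by (simp add: adj_def)
    show "\<not> connected_in ?V (?E - {{u,v}}) u v"
    proof (cases "{u,v} \<in> E1")
      case True then show ?thesis using join_bridge_left[OF t1 t2 d x y True uv] by simp
    next
      case F1: False
      show ?thesis
      proof (cases "{u,v} \<in> E2")
        case True
        have "\<not> connected_in (V2 \<union> V1) (E2 \<union> E1 \<union> {{y,x}} - {{u,v}}) u v"
          using join_bridge_left[OF t2 t1 _ y x True uv] d by auto
        then show ?thesis by (simp add: Un_commute Un_left_commute insert_commute)
      next
        case False
        then have e: "{u,v} = {x,y}" using ad F1 by (auto simp: adj_def)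
        have nx: "{x,y} \<notin> E1" using graph_adj[OF g1, of x y] y d xy by (auto simp: adj_def)
        have ny: "{x,y} \<notin> E2" using graph_adj[OF g2, of x y] x d xy by (auto simp: adj_def)
        have eq: "?E - {{u,v}} = E1 \<union> E2" using nx ny e by auto
        have "(u = x \<and> v = y) \<or> (u = y \<and> v = x)" using e by (auto simp: doubleton_eq_iff)
        then show ?thesis
        proof
          assume "u = x \<and> v = y"
          then show ?thesis using conn_side[OF g1 g2 d, of ?V x y] eq x y d by auto
        next
          assume "u = y \<and> v = x"
          then show ?thesis using conn_side[OF g2 g1 _, of ?V y x] eq x y d by (auto simp: Un_commute)
        qed
      qed
    qed
  qed
  show ?thesis using t1 t2 g conn b bridges_acyclic[OF g b] unfolding is_tree_def by auto
qed





lemma tree_conn: "is_tree X E \<Longrightarrow> a \<in> X \<Longrightarrow> b \<in> X \<Longrightarrow> connected_in X E a b"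
  unfolding is_tree_def connected_graph_def by blast

lemma tree_graph: "is_tree X E \<Longrightarrow> graph_on X E"
  unfolding is_tree_def by blast

lemma graph_edge: "graph_on X E \<Longrightarrow> f \<in> E \<Longrightarrow> \<exists>a b. a \<in> X \<and> b \<in> X \<and> a \<noteq> b \<and> f = {a,b}"
  unfolding graph_on_def by blast

lemma split_cover:
  assumes t: "is_tree X E" and e: "{u,v} \<in> E" and uv: "u \<noteq> v" and w: "w \<in> X"
  shows "connected_in X (E - {{u,v}}) u w \<or> connected_in X (E - {{u,v}}) v w"
proof -
  have uX: "u \<in> X" using graph_adj[OF tree_graph[OF t], of u v] e uv by (auto simp: adj_def)
  have "(u, w) \<in> {(a, b). a \<in> X \<and> b \<in> X \<and> adj E a b}\<^sup>*"
    using tree_conn[OF t uX w] unfolding connected_in_def .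
  then show ?thesis
  proof (induction rule: rtrancl_induct)
    case base then show ?case by simp
  next
    case (step b c)
    then have bc: "b \<in> X" "c \<in> X" "adj E b c" by auto
    show ?case
    proof (cases "{b,c} = {u,v}")
      case True then have "c = u \<or> c = v" by (auto simp: doubleton_eq_iff)
      then show ?thesis by auto
    next
      case False
      then have "adj (E - {{u,v}}) b c" using bc by (auto simp: adj_def)
      note ad = this
      from step.IH show ?thesis
      proof
        assume "connected_in X (E - {{u,v}}) u b"
        then show ?thesis using conn_step[OF _ bc(1,2) ad] by blast
      next
        assume "connected_in X (E - {{u,v}}) v b"
        then show ?thesis using conn_step[OF _ bc(1,2) ad] by blast
      qed
    qed
  qed
qed

lemma split_not:
  assumes t: "is_tree X E" and e: "{u,v} \<in> E" and uv: "u \<noteq> v"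
  shows "\<not> connected_in X (E - {{u,v}}) u v"
proof -
  have "adj E u v" using e uv by (simp add: adj_def)
  then show ?thesis using tree_bridges[OF t] unfolding bridges_def by blast
qed

lemma split_tree_side:
  assumes t: "is_tree X E" and e: "{u,v} \<in> E" and uv: "u \<noteq> v"
  shows "is_tree {w\<in>X. connected_in X (E - {{u,v}}) u w} {f\<in>E. f \<subseteq> {w\<in>X. connected_in X (E - {{u,v}}) u w}}"
proof -
  define C where "C = {w\<in>X. connected_in X (E - {{u,v}}) u w}"
  have uX: "u \<in> X" using graph_adj[OF tree_graph[OF t], of u v] e uv by (auto simp: adj_def)
  have fin: "finite C" using t unfolding is_tree_def C_def by auto
  have ne: "C \<noteq> {}" using uX unfolding C_def by auto
  have g: "graph_on C {f\<in>E. f \<subseteq> C}"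
    unfolding graph_on_def
  proof
    fix f assume "f \<in> {f\<in>E. f \<subseteq> C}"
    then have f: "f \<in> E" "f \<subseteq> C" by auto
    then obtain a b where "a \<noteq> b" "f = {a,b}" using graph_edge[OF tree_graph[OF t]] by blast
    then show "\<exists>x y. x \<in> C \<and> y \<in> C \<and> x \<noteq> y \<and> f = {x, y}" using f by blast
  qed
  have cu: "connected_in C {f\<in>E. f \<subseteq> C} u w" if "w \<in> C" for w
  proof -
    have "connected_in X (E - {{u,v}}) u w" using that unfolding C_def by blast
    from conn_restrict[OF this] have "connected_in C {f\<in>E - {{u,v}}. f \<subseteq> C} u w"
      unfolding C_def .
    then show ?thesis by (rule conn_mono) auto
  qed
  have c: "connected_graph C {f\<in>E. f \<subseteq> C}"
    unfolding connected_graph_def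
  proof (intro ballI)
    fix a b assume ab: "a \<in> C" "b \<in> C"
    have "connected_in C {f\<in>E. f \<subseteq> C} a u" using conn_sym[OF cu[OF ab(1)]] .
    moreover have "connected_in C {f\<in>E. f \<subseteq> C} u b" using cu[OF ab(2)] .
    ultimately show "connected_in C {f\<in>E. f \<subseteq> C} a b" by (rule conn_trans)
  qed
  have a: "acyclic_graph {f\<in>E. f \<subseteq> C}"
    using t acyclic_mono[of E "{f\<in>E. f \<subseteq> C}"] unfolding is_tree_def by blast
  have "is_tree C {f\<in>E. f \<subseteq> C}" using fin ne g c a unfolding is_tree_def by blast
  then show ?thesis unfolding C_def .
qed

lemma split_edges:
  assumes t: "is_tree X E" and e: "{u,v} \<in> E" and uv: "u \<noteq> v"
  shows "E = {f\<in>E. f \<subseteq> {w\<in>X. connected_in X (E - {{u,v}}) u w}}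
           \<union> {f\<in>E. f \<subseteq> {w\<in>X. connected_in X (E - {{u,v}}) v w}} \<union> {{u,v}}"
proof -
  have "f \<subseteq> {w\<in>X. connected_in X (E - {{u,v}}) u w} \<or> f \<subseteq> {w\<in>X. connected_in X (E - {{u,v}}) v w}"
    if f: "f \<in> E" "f \<noteq> {u,v}" for f
  proof -
    obtain a b where ab: "a \<in> X" "b \<in> X" "a \<noteq> b" "f = {a,b}" using graph_edge[OF tree_graph[OF t] f(1)] by blast
    then have ad: "adj (E - {{u,v}}) a b" using f by (auto simp: adj_def)
    have "connected_in X (E - {{u,v}}) u a \<or> connected_in X (E - {{u,v}}) v a"
      using split_cover[OF t e uv ab(1)] .
    then show ?thesis
    proof
      assume "connected_in X (E - {{u,v}}) u a"
      then have "connected_in X (E - {{u,v}}) u b" using conn_step[OF _ ab(1,2) ad] by blast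
      then have "f \<subseteq> {w\<in>X. connected_in X (E - {{u,v}}) u w}" using \<open>connected_in X (E - {{u,v}}) u a\<close> ab by auto
      then show ?thesis by (rule disjI1)
    next
      assume "connected_in X (E - {{u,v}}) v a"
      then have "connected_in X (E - {{u,v}}) v b" using conn_step[OF _ ab(1,2) ad] by blast
      then have "f \<subseteq> {w\<in>X. connected_in X (E - {{u,v}}) v w}" using \<open>connected_in X (E - {{u,v}}) v a\<close> ab by auto
      then show ?thesis by (rule disjI2)
    qed
  qed
  note H = this
  show ?thesis
  proof (intro equalityI subsetI)
    fix f assume f: "f \<in> E"
    show "f \<in> {f\<in>E. f \<subseteq> {w\<in>X. connected_in X (E - {{u,v}}) u w}}
           \<union> {f\<in>E. f \<subseteq> {w\<in>X. connected_in X (E - {{u,v}}) v w}} \<union> {{u,v}}"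
    proof (cases "f = {u,v}")
      case True then show ?thesis by simp
    next
      case False then show ?thesis using H[OF f False] f by blast
    qed
  next
    fix f assume "f \<in> {f\<in>E. f \<subseteq> {w\<in>X. connected_in X (E - {{u,v}}) u w}}
           \<union> {f\<in>E. f \<subseteq> {w\<in>X. connected_in X (E - {{u,v}}) v w}} \<union> {{u,v}}"
    then show "f \<in> E" using e by blast
  qed
qed

lemma split_compl:
  assumes t: "is_tree X E" and e: "{u,v} \<in> E" and uv: "u \<noteq> v"
  shows "X - {w\<in>X. connected_in X (E - {{u,v}}) u w} = {w\<in>X. connected_in X (E - {{u,v}}) v w}"
proof -
  have n: "\<not> connected_in X (E - {{u,v}}) u v" by (rule split_not[OF t e uv])
  have "\<not> (connected_in X (E - {{u,v}}) u w \<and> connected_in X (E - {{u,v}}) v w)" for w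
  proof
    assume "connected_in X (E - {{u,v}}) u w \<and> connected_in X (E - {{u,v}}) v w"
    then have "connected_in X (E - {{u,v}}) u w" "connected_in X (E - {{u,v}}) w v"
      using conn_sym[of X "E - {{u,v}}" v w] by blast+
    then have "connected_in X (E - {{u,v}}) u v" by (rule conn_trans)
    then show False using n by blast
  qed
  note H = this
  show ?thesis
  proof (intro equalityI subsetI)
    fix w assume "w \<in> X - {w\<in>X. connected_in X (E - {{u,v}}) u w}"
    then have "w \<in> X" "\<not> connected_in X (E - {{u,v}}) u w" by auto
    then show "w \<in> {w\<in>X. connected_in X (E - {{u,v}}) v w}" using split_cover[OF t e uv] by blast
  next
    fix w assume "w \<in> {w\<in>X. connected_in X (E - {{u,v}}) v w}"
    then have "w \<in> X" "connected_in X (E - {{u,v}}) v w" by auto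
    then show "w \<in> X - {w\<in>X. connected_in X (E - {{u,v}}) u w}" using H[of w] by blast
  qed
qed




definition RT :: "'a set \<Rightarrow> ('a \<times> 'a set set) set" where
  "RT V = {(r,E). rooted_tree V r E}"

definition DT :: "'a set \<Rightarrow> ('a \<times> 'a \<times> 'a set set) set" where
  "DT V = {(r,p,E). rooted_tree V r E \<and> p \<in> V}"

definition J :: "'a set \<times> ('a \<times> 'a set set) \<times> ('a \<times> 'a \<times> 'a set set) \<Rightarrow> 'a \<times> 'a \<times> 'a set set" where
  "J = (\<lambda>(V, (r, E1), (v, p, E2)). (r, p, E1 \<union> E2 \<union> {{r,v}}))"

lemma join_struct:
  assumes t1: "is_tree V1 E1" and t2: "is_tree V2 E2" and d: "V1 \<inter> V2 = {}"
    and x: "x \<in> V1" and y: "y \<in> V2"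
  shows "E1 \<union> E2 \<union> {{x,y}} - {{x,y}} = E1 \<union> E2"
    and "{w \<in> V1 \<union> V2. connected_in (V1 \<union> V2) (E1 \<union> E2) x w} = V1"
    and "E1 = {f \<in> E1 \<union> E2 \<union> {{x,y}}. f \<subseteq> V1}"
    and "E2 = {f \<in> E1 \<union> E2 \<union> {{x,y}}. f \<subseteq> V2}"
proof -
  have g1: "graph_on V1 E1" and g2: "graph_on V2 E2" using t1 t2 by (auto simp: tree_graph)
  have e1: "f \<subseteq> V1" if "f \<in> E1" for f using graph_edge[OF g1 that] by blast
  have e2: "f \<subseteq> V2" if "f \<in> E2" for f using graph_edge[OF g2 that] by blast
  have ne1: "\<not> f \<subseteq> V1" if "f \<in> E2" for f
  proof
    assume "f \<subseteq> V1"
    moreover obtain a b where "a \<in> V2" "f = {a,b}" using graph_edge[OF g2 \<open>f \<in> E2\<close>] by blast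
    ultimately show False using d by blast
  qed
  have ne2: "\<not> f \<subseteq> V2" if "f \<in> E1" for f
  proof
    assume "f \<subseteq> V2"
    moreover obtain a b where "a \<in> V1" "f = {a,b}" using graph_edge[OF g1 \<open>f \<in> E1\<close>] by blast
    ultimately show False using d by blast
  qed
  have yV1: "y \<notin> V1" and xV2: "x \<notin> V2" using d x y by auto
  have nx1: "{x,y} \<notin> E1" using e1 yV1 by blast
  have nx2: "{x,y} \<notin> E2" using e2 xV2 by blast
  show "E1 \<union> E2 \<union> {{x,y}} - {{x,y}} = E1 \<union> E2" using nx1 nx2 by blast
  show "{w \<in> V1 \<union> V2. connected_in (V1 \<union> V2) (E1 \<union> E2) x w} = V1"
  proof (intro equalityI subsetI)
    fix w assume "w \<in> {w \<in> V1 \<union> V2. connected_in (V1 \<union> V2) (E1 \<union> E2) x w}"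
    then have "connected_in (V1 \<union> V2) (E1 \<union> E2) x w" by blast
    then show "w \<in> V1" using conn_side[OF g1 g2 d _ x] by blast
  next
    fix w assume w: "w \<in> V1"
    have "connected_in V1 E1 x w" using tree_conn[OF t1 x w] .
    then have "connected_in (V1 \<union> V2) (E1 \<union> E2) x w" by (rule conn_mono) auto
    then show "w \<in> {w \<in> V1 \<union> V2. connected_in (V1 \<union> V2) (E1 \<union> E2) x w}" using w by blast
  qed
  show "E1 = {f \<in> E1 \<union> E2 \<union> {{x,y}}. f \<subseteq> V1}"
    using e1 ne1 yV1 by blast
  show "E2 = {f \<in> E1 \<union> E2 \<union> {{x,y}}. f \<subseteq> V2}"
    using e2 ne2 xV2 by blast
qed


lemma graph_sub: "graph_on X E \<Longrightarrow> f \<in> E \<Longrightarrow> f \<subseteq> X"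
  using graph_edge by fastforce

lemma rooted_treeD: "rooted_tree V r E \<Longrightarrow> is_tree V E \<and> r \<in> V"
  unfolding rooted_tree_def by blast

lemma J_inj:
  "inj_on J (SIGMA V:{V. V \<subseteq> X \<and> V \<noteq> {} \<and> V \<noteq> X}. RT V \<times> DT (X - V))"
proof (rule inj_onI)
  fix s s' assume s: "s \<in> (SIGMA V:{V. V \<subseteq> X \<and> V \<noteq> {} \<and> V \<noteq> X}. RT V \<times> DT (X - V))"
    and s': "s' \<in> (SIGMA V:{V. V \<subseteq> X \<and> V \<noteq> {} \<and> V \<noteq> X}. RT V \<times> DT (X - V))"
    and eq: "J s = J s'"
  obtain V r E1 v p E2 where sd: "s = (V, (r, E1), (v, p, E2))" by (cases s) auto
  obtain V' r' E1' v' p' E2' where sd': "s' = (V', (r', E1'), (v', p', E2'))" by (cases s') auto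
  have VX: "V \<subseteq> X" and t1: "is_tree V E1" and r: "r \<in> V" and t2: "is_tree (X - V) E2"
    and v: "v \<in> X - V" and p: "p \<in> X - V"
    using s sd by (auto simp: RT_def DT_def rooted_tree_def)
  have VX': "V' \<subseteq> X" and t1': "is_tree V' E1'" and r': "r' \<in> V'" and t2': "is_tree (X - V') E2'"
    and v': "v' \<in> X - V'" and p': "p' \<in> X - V'"
    using s' sd' by (auto simp: RT_def DT_def rooted_tree_def)
  have A: "J s = (r, p, E1 \<union> E2 \<union> {{r,v}})" and B: "J s' = (r', p', E1' \<union> E2' \<union> {{r',v'}})"
    unfolding sd sd' J_def by simp_all
  have C: "(r', p', E1' \<union> E2' \<union> {{r',v'}}) = (r, p, E1 \<union> E2 \<union> {{r,v}})" using eq unfolding A B by (rule sym)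
  have rr: "r' = r" using C by simp
  have pp: "p' = p" using C by simp
  have EE: "E1' \<union> E2' \<union> {{r,v'}} = E1 \<union> E2 \<union> {{r,v}}" using C unfolding rr by simp
  define E where "E = E1 \<union> E2 \<union> {{r,v}}"
  have d: "V \<inter> (X - V) = {}" and un: "V \<union> (X - V) = X" using VX by auto
  have d': "V' \<inter> (X - V') = {}" and un': "V' \<union> (X - V') = X" using VX' by auto
  note st = join_struct[OF t1 t2 d r v, unfolded un, folded E_def]
  note st' = join_struct[OF t1' t2' d' r' v', unfolded un' rr EE, folded E_def]
  have vv: "v' = v"
  proof (rule ccontr)
    assume nv: "v' \<noteq> v"
    have "\<not> connected_in X (E1' \<union> E2') r p"
      using st'(2) p' pp rr by blast
    then have nc: "\<not> connected_in X (E - {{r,v'}}) r p" using st'(1) by simp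
    have rX: "r \<in> X" and vX: "v \<in> X" using r v VX by auto
    have n2: "{r,v'} \<notin> E2" using graph_sub[OF tree_graph[OF t2], of "{r,v'}"] r by blast
    have n3: "{r,v} \<noteq> {r,v'}" using nv by (auto simp: doubleton_eq_iff)
    have sub: "E2 \<subseteq> E - {{r,v'}}" using n2 unfolding E_def by blast
    have "adj (E - {{r,v'}}) r v" using n3 r v unfolding E_def adj_def by auto
    then have c1: "connected_in X (E - {{r,v'}}) r v" using rX vX by (simp add: conn_edge)
    have "connected_in (X - V) E2 v p" using tree_conn[OF t2 v p] .
    then have "connected_in X (E - {{r,v'}}) v p" using conn_mono[OF _ _ sub, of "X - V" v p X] by blast
    with c1 have "connected_in X (E - {{r,v'}}) r p" by (rule conn_trans)
    with nc show False by blast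
  qed
  have VV: "V' = V"
    using st(1,2) st'(1,2) unfolding vv by simp
  have "E1' = E1" using st(3) st'(3) unfolding VV by simp
  moreover have "E2' = E2" using st(4) st'(4) unfolding VV by simp
  ultimately show "s = s'" using sd sd' rr pp vv VV by simp
qed


lemma J_image:
  "J ` (SIGMA V:{V. V \<subseteq> X \<and> V \<noteq> {} \<and> V \<noteq> X}. RT V \<times> DT (X - V))
     = {(r,p,E). rooted_tree X r E \<and> p \<in> X \<and> r \<noteq> p}"
proof (intro equalityI subsetI)
  fix z assume "z \<in> J ` (SIGMA V:{V. V \<subseteq> X \<and> V \<noteq> {} \<and> V \<noteq> X}. RT V \<times> DT (X - V))"
  then obtain s where s: "s \<in> (SIGMA V:{V. V \<subseteq> X \<and> V \<noteq> {} \<and> V \<noteq> X}. RT V \<times> DT (X - V))"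
    and z: "z = J s" by blast
  obtain V r E1 v p E2 where sd: "s = (V, (r, E1), (v, p, E2))" by (cases s) auto
  have VX: "V \<subseteq> X" and t1: "is_tree V E1" and r: "r \<in> V" and t2: "is_tree (X - V) E2"
    and v: "v \<in> X - V" and p: "p \<in> X - V"
    using s sd by (auto simp: RT_def DT_def rooted_tree_def)
  have d: "V \<inter> (X - V) = {}" and un: "V \<union> (X - V) = X" using VX by auto
  have "is_tree X (E1 \<union> E2 \<union> {{r,v}})" using join_tree[OF t1 t2 d r v] unfolding un .
  moreover have "z = (r, p, E1 \<union> E2 \<union> {{r,v}})" unfolding z sd J_def by simp
  ultimately show "z \<in> {(r,p,E). rooted_tree X r E \<and> p \<in> X \<and> r \<noteq> p}"
    using r p VX unfolding rooted_tree_def by auto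
next
  fix z assume "z \<in> {(r,p,E). rooted_tree X r E \<and> p \<in> X \<and> r \<noteq> p}"
  then obtain r p E where zd: "z = (r,p,E)" and t: "is_tree X E" and r: "r \<in> X" and p: "p \<in> X"
    and rp: "r \<noteq> p" unfolding rooted_tree_def by auto
  obtain v where v: "adj E r v" and nc: "\<not> connected_in X (E - {{r,v}}) p r"
    using neighbor_exists[OF t tree_conn[OF t p r] rp[symmetric]] by blast
  have e: "{r,v} \<in> E" and rv: "r \<noteq> v" using v by (auto simp: adj_def)
  have e': "{v,r} \<in> E" and vr: "v \<noteq> r" using e rv by (auto simp: insert_commute)
  have sw: "{v,r} = {r,v}" by blast
  define V where "V = {w\<in>X. connected_in X (E - {{r,v}}) r w}"
  define W where "W = {w\<in>X. connected_in X (E - {{r,v}}) v w}"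
  have tV: "is_tree V {f\<in>E. f \<subseteq> V}" using split_tree_side[OF t e rv] unfolding V_def .
  have tW: "is_tree W {f\<in>E. f \<subseteq> W}" using split_tree_side[OF t e' vr] unfolding sw W_def .
  have cW: "X - V = W" using split_compl[OF t e rv] unfolding V_def W_def .
  have Eeq: "E = {f\<in>E. f \<subseteq> V} \<union> {f\<in>E. f \<subseteq> W} \<union> {{r,v}}"
    using split_edges[OF t e rv] unfolding V_def W_def .
  have rV: "r \<in> V" using r unfolding V_def by simp
  have pV: "p \<notin> V" using nc conn_sym[of X "E - {{r,v}}" r p] unfolding V_def by blast
  have vW: "v \<in> W" using graph_adj[OF tree_graph[OF t] v] unfolding W_def by simp
  have pW: "p \<in> W" using pV p cW by blast
  have VX: "V \<subseteq> X" unfolding V_def by blast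
  let ?s = "(V, (r, {f\<in>E. f \<subseteq> V}), (v, p, {f\<in>E. f \<subseteq> W}))"
  have I: "V \<in> {V. V \<subseteq> X \<and> V \<noteq> {} \<and> V \<noteq> X}" using VX rV pV p by blast
  have R: "(r, {f\<in>E. f \<subseteq> V}) \<in> RT V" unfolding RT_def rooted_tree_def using tV rV by simp
  have D: "(v, p, {f\<in>E. f \<subseteq> W}) \<in> DT (X - V)" unfolding DT_def rooted_tree_def cW using tW vW pW by simp
  have "?s \<in> (SIGMA V:{V. V \<subseteq> X \<and> V \<noteq> {} \<and> V \<noteq> X}. RT V \<times> DT (X - V))"
    using I R D by (intro SigmaI) auto
  moreover have "z = J ?s" unfolding J_def zd using Eeq[symmetric] by simp
  ultimately show "z \<in> J ` (SIGMA V:{V. V \<subseteq> X \<and> V \<noteq> {} \<and> V \<noteq> X}. RT V \<times> DT (X - V))"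
    by (rule rev_image_eqI)
qed




lemma single_tree: "is_tree {a} {}"
proof -
  have g: "graph_on {a} {}" unfolding graph_on_def by simp
  have b: "bridges {a} {}" unfolding bridges_def adj_def by simp
  have c: "connected_graph {a} {}" unfolding connected_graph_def by simp
  show ?thesis unfolding is_tree_def using g c bridges_acyclic[OF g b] by simp
qed

lemma K_into:
  assumes a: "a \<in> A" and z: "z \<in> DT (A - {a})"
  shows "(\<lambda>(r,p,E). (r, E \<union> {{p,a}})) z \<in> rooted_trees_leaf A a"
proof -
  obtain r p E' where zd: "z = (r,p,E')" by (cases z) auto
  have t: "is_tree (A - {a}) E'" and r: "r \<in> A - {a}" and p: "p \<in> A - {a}"
    using z unfolding zd DT_def rooted_tree_def by auto
  have d: "(A - {a}) \<inter> {a} = {}" and un: "(A - {a}) \<union> {a} = A" using a by auto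
  have tA: "is_tree A (E' \<union> {} \<union> {{p,a}})" using join_tree[OF t single_tree d p] un by simp
  let ?E = "E' \<union> {{p,a}}"
  have naE: "{u,a} \<notin> E'" for u using graph_sub[OF tree_graph[OF t], of "{u,a}"] by blast
  have leaf: "\<not> is_child A r ?E u a" if u: "u \<in> A" for u
  proof
    assume ch: "is_child A r ?E u a"
    then have "adj ?E u a" unfolding is_child_def by blast
    then have "{u,a} \<in> ?E" "u \<noteq> a" unfolding adj_def by auto
    then have "{u,a} = {p,a}" using naE by blast
    then have up: "u = p" using \<open>u \<noteq> a\<close> by (auto simp: doubleton_eq_iff)
    have "{p,a} \<notin> E'" using naE by blast
    then have sub: "E' \<subseteq> ?E - {{u,a}}" using up by blast
    have "connected_in (A - {a}) E' p r" using tree_conn[OF t p r] .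
    then have "connected_in A (?E - {{u,a}}) u r" using conn_mono[OF _ _ sub, of "A - {a}" p r A] up by blast
    then show False using ch unfolding is_child_def by blast
  qed
  have "rooted_tree A r ?E" using tA r unfolding rooted_tree_def by simp
  moreover have "is_leaf A r ?E a" using leaf a unfolding is_leaf_def by blast
  ultimately show ?thesis unfolding zd rooted_trees_leaf_def by simp
qed

lemma K_inj:
  assumes a: "a \<in> A"
  shows "inj_on (\<lambda>(r,p,E). (r, E \<union> {{p,a}})) (DT (A - {a}))"
proof (rule inj_onI)
  fix z z' assume z: "z \<in> DT (A - {a})" and z': "z' \<in> DT (A - {a})"
    and eq: "(\<lambda>(r,p,E). (r, E \<union> {{p,a}})) z = (\<lambda>(r,p,E). (r, E \<union> {{p,a}})) z'"
  obtain r p E where zd: "z = (r,p,E)" by (cases z) auto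
  obtain r' p' E' where zd': "z' = (r',p',E')" by (cases z') auto
  have t: "is_tree (A - {a}) E" and p: "p \<in> A - {a}" using z unfolding zd DT_def rooted_tree_def by auto
  have t': "is_tree (A - {a}) E'" and p': "p' \<in> A - {a}" using z' unfolding zd' DT_def rooted_tree_def by auto
  have e: "r = r'" and e2: "E \<union> {{p,a}} = E' \<union> {{p',a}}" using eq unfolding zd zd' by simp_all
  have naE: "{u,a} \<notin> E" for u using graph_sub[OF tree_graph[OF t], of "{u,a}"] by blast
  have naE': "{u,a} \<notin> E'" for u using graph_sub[OF tree_graph[OF t'], of "{u,a}"] by blast
  have "{p,a} \<in> E' \<union> {{p',a}}" using e2 by blast
  then have "{p,a} = {p',a}" using naE' by blast
  then have pp: "p = p'" using p by (auto simp: doubleton_eq_iff)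
  have "E = (E \<union> {{p,a}}) - {{p,a}}" using naE by blast
  also have "\<dots> = (E' \<union> {{p,a}}) - {{p,a}}" using e2 pp by simp
  also have "\<dots> = E'" using naE' by blast
  finally show "z = z'" unfolding zd zd' using e pp by simp
qed


lemma K_surj:
  assumes a: "a \<in> A" and X: "A - {a} \<noteq> {}" and z: "z \<in> rooted_trees_leaf A a"
  shows "z \<in> (\<lambda>(r,p,E). (r, E \<union> {{p,a}})) ` DT (A - {a})"
proof -
  obtain r E where zd: "z = (r,E)" by (cases z) auto
  have t: "is_tree A E" and r: "r \<in> A" and lf: "\<And>u. u \<in> A \<Longrightarrow> \<not> is_child A r E u a"
    using z unfolding zd rooted_trees_leaf_def rooted_tree_def is_leaf_def by auto
  have b: "bridges A E" using tree_bridges[OF t] .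
  have bq: "\<not> connected_in A (E - {{q,a}}) q a" if "adj E q a" for q
    using b that unfolding bridges_def by blast
  have ra: "r \<noteq> a"
  proof
    assume ra: "r = a"
    obtain w where w: "w \<in> A" "w \<noteq> a" using X by blast
    obtain q where q: "q \<in> A" "adj E a q" using conn_first[OF tree_conn[OF t a w(1)]] w by blast
    have "adj E q a" using adj_sym[OF q(2)] .
    then have "is_child A r E q a" using bq[of q] ra unfolding is_child_def by blast
    then show False using lf q by blast
  qed
  obtain p where pa: "adj E a p" and nra: "\<not> connected_in A (E - {{a,p}}) r a"
    using neighbor_exists[OF t tree_conn[OF t r a] ra] by blast
  have e: "{a,p} \<in> E" and ap: "a \<noteq> p" using pa by (auto simp: adj_def)
  have e': "{p,a} \<in> E" and pa': "p \<noteq> a" using e ap by (auto simp: insert_commute)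
  have sw: "{p,a} = {a,p}" by blast
  define Ca where "Ca = {w\<in>A. connected_in A (E - {{a,p}}) a w}"
  define Cp where "Cp = {w\<in>A. connected_in A (E - {{a,p}}) p w}"
  have tCa: "is_tree Ca {f\<in>E. f \<subseteq> Ca}" using split_tree_side[OF t e ap] unfolding Ca_def .
  have tCp: "is_tree Cp {f\<in>E. f \<subseteq> Cp}" using split_tree_side[OF t e' pa'] unfolding sw Cp_def .
  have cC: "A - Ca = Cp" using split_compl[OF t e ap] unfolding Ca_def Cp_def .
  have Eeq: "E = {f\<in>E. f \<subseteq> Ca} \<union> {f\<in>E. f \<subseteq> Cp} \<union> {{a,p}}"
    using split_edges[OF t e ap] unfolding Ca_def Cp_def .
  have nap: "\<not> connected_in A (E - {{a,p}}) a p" using split_not[OF t e ap] .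
  have rCa: "r \<notin> Ca" using nra conn_sym[of A "E - {{a,p}}" a r] unfolding Ca_def by blast
  have rCp: "r \<in> Cp" using rCa r cC by blast
  have aCa: "a \<in> Ca" using a unfolding Ca_def by simp
  have aCp: "a \<notin> Cp" using aCa cC by blast
  have pCa: "p \<notin> Ca" using nap unfolding Ca_def by blast
  have Ca1: "Ca = {a}"
  proof (rule ccontr)
    assume "Ca \<noteq> {a}"
    then obtain w where w: "w \<in> Ca" "w \<noteq> a" using aCa by blast
    obtain q where q: "q \<in> Ca" "adj {f\<in>E. f \<subseteq> Ca} a q"
      using conn_first[OF tree_conn[OF tCa aCa w(1)]] w(2) by blast
    have aq: "adj E a q" using q(2) by (rule adj_mono) blast
    have qA: "q \<in> A" using q(1) unfolding Ca_def by blast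
    have qp: "q \<noteq> p" using q(1) pCa by blast
    have qa: "adj E q a" using adj_sym[OF aq] .
    have c1: "connected_in A (E - {{q,a}}) q r" using lf[OF qA] qa unfolding is_child_def by blast
    have "connected_in A (E - {{a,p}}) p r" using rCp unfolding Cp_def by blast
    from conn_restrict[OF this]
    have c2: "connected_in Cp {f\<in>E - {{a,p}}. f \<subseteq> Cp} p r" unfolding Cp_def .
    have sub: "{f\<in>E - {{a,p}}. f \<subseteq> Cp} \<subseteq> E - {{q,a}}" using aCp by blast
    have CpA: "Cp \<subseteq> A" unfolding Cp_def by blast
    have c3: "connected_in A (E - {{q,a}}) p r" using conn_mono[OF c2 CpA sub] .
    have c4: "connected_in A (E - {{q,a}}) q p" using conn_trans[OF c1 conn_sym[OF c3]] .
    have ne: "{a,p} \<noteq> {q,a}" using qp ap by (auto simp: doubleton_eq_iff)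
    have "adj (E - {{q,a}}) a p" using pa ne unfolding adj_def by blast
    moreover have pA: "p \<in> A" using graph_adj[OF tree_graph[OF t] pa] by blast
    ultimately have "connected_in A (E - {{q,a}}) a p" using a by (simp add: conn_edge)
    then have "connected_in A (E - {{q,a}}) q a" using conn_trans[OF c4 conn_sym] by blast
    then show False using bq[OF qa] by blast
  qed
  have CpX: "Cp = A - {a}" using cC Ca1 by simp
  have Ea: "{f\<in>E. f \<subseteq> Ca} = {}"
  proof -
    have "\<not> f \<subseteq> {a}" if "f \<in> E" for f
      using graph_edge[OF tree_graph[OF t] that] by auto
    then show ?thesis unfolding Ca1 by blast
  qed
  have pCp: "p \<in> Cp" unfolding Cp_def using graph_adj[OF tree_graph[OF t] pa] by simp
  let ?w = "(r, p, {f\<in>E. f \<subseteq> Cp})"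
  have "?w \<in> DT (A - {a})" unfolding DT_def rooted_tree_def using tCp rCp pCp unfolding CpX by simp
  moreover have "z = (\<lambda>(r,p,E). (r, E \<union> {{p,a}})) ?w"
  proof -
    have "E = {f\<in>E. f \<subseteq> Cp} \<union> {{p,a}}" using Eeq unfolding Ea sw by simp
    then show ?thesis unfolding zd by simp
  qed
  ultimately show ?thesis by (rule rev_image_eqI)
qed




lemma of_nil: "ordered_forest X [] \<longleftrightarrow> X = {}"
  unfolding ordered_forest_def by auto

lemma rooted_tree_ne: "rooted_tree V r E \<Longrightarrow> V \<noteq> {}"
  unfolding rooted_tree_def is_tree_def by blast

lemma ofD1: "ordered_forest X F \<Longrightarrow> (V,r,E) \<in> set F \<Longrightarrow> rooted_tree V r E"
  unfolding ordered_forest_def by fastforce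

lemma ofD2: "ordered_forest X F \<Longrightarrow> i < length F \<Longrightarrow> j < length F \<Longrightarrow> i \<noteq> j \<Longrightarrow> fst (F!i) \<inter> fst (F!j) = {}"
  unfolding ordered_forest_def by simp

lemma ofD3: "ordered_forest X F \<Longrightarrow> (\<Union>T\<in>set F. fst T) = X"
  unfolding ordered_forest_def by simp

lemma ofI:
  assumes "\<And>V r E. (V,r,E) \<in> set F \<Longrightarrow> rooted_tree V r E"
    and "\<And>i j. i < length F \<Longrightarrow> j < length F \<Longrightarrow> i \<noteq> j \<Longrightarrow> fst (F!i) \<inter> fst (F!j) = {}"
    and "(\<Union>T\<in>set F. fst T) = X"
  shows "ordered_forest X F"
  unfolding ordered_forest_def using assms by auto

lemma of_cons:
  "ordered_forest X ((V,r,E)#F) \<longleftrightarrow> rooted_tree V r E \<and> V \<subseteq> X \<and> ordered_forest (X - V) F"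
proof
  assume H: "ordered_forest X ((V,r,E)#F)"
  have rt: "rooted_tree V r E" using ofD1[OF H, of V r E] by simp
  have un: "(\<Union>T\<in>set ((V,r,E)#F). fst T) = X" using ofD3[OF H] .
  have VX: "V \<subseteq> X" using un by auto
  have d0: "V \<inter> fst T = {}" if T: "T \<in> set F" for T
  proof -
    obtain j where j: "j < length F" "F ! j = T" using T by (auto simp: in_set_conv_nth)
    have "fst (((V,r,E)#F) ! 0) \<inter> fst (((V,r,E)#F) ! Suc j) = {}"
      using ofD2[OF H, of 0 "Suc j"] j by simp
    then show ?thesis using j by simp
  qed
  have "ordered_forest (X - V) F"
  proof (rule ofI)
    fix V' r' E' assume "(V',r',E') \<in> set F"
    then show "rooted_tree V' r' E'" using ofD1[OF H, of V' r' E'] by simp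
  next
    fix i j assume "i < length F" "j < length F" "i \<noteq> j"
    then show "fst (F ! i) \<inter> fst (F ! j) = {}" using ofD2[OF H, of "Suc i" "Suc j"] by simp
  next
    show "(\<Union>T\<in>set F. fst T) = X - V" using un d0 by auto
  qed
  with rt VX show "rooted_tree V r E \<and> V \<subseteq> X \<and> ordered_forest (X - V) F"
    by (intro conjI)
next
  assume H: "rooted_tree V r E \<and> V \<subseteq> X \<and> ordered_forest (X - V) F"
  have rt: "rooted_tree V r E" using H by (rule conjunct1)
  have VX: "V \<subseteq> X" using H by (rule conjunct1[OF conjunct2])
  have OF: "ordered_forest (X - V) F" using H by (rule conjunct2[OF conjunct2])
  have un': "(\<Union>T\<in>set F. fst T) = X - V" using ofD3[OF OF] .
  have sub: "fst T \<subseteq> X - V" if "T \<in> set F" for T using un' that by blast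
  show "ordered_forest X ((V,r,E)#F)"
  proof (rule ofI)
    fix V' r' E' assume "(V',r',E') \<in> set ((V,r,E)#F)"
    then show "rooted_tree V' r' E'" using rt ofD1[OF OF, of V' r' E'] by auto
  next
    show "(\<Union>T\<in>set ((V,r,E)#F). fst T) = X" using un' VX by auto
  next
    fix i j assume ij: "i < length ((V,r,E)#F)" "j < length ((V,r,E)#F)" "i \<noteq> j"
    show "fst (((V,r,E)#F) ! i) \<inter> fst (((V,r,E)#F) ! j) = {}"
    proof (cases i)
      case 0
      then obtain j' where j: "j = Suc j'" "j' < length F" using ij by (cases j) auto
      then have "F ! j' \<in> set F" by simp
      then have "fst (F ! j') \<subseteq> X - V" by (rule sub)
      then show ?thesis using 0 j by auto
    next
      case (Suc i')
      show ?thesis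
      proof (cases j)
        case 0
        have "F ! i' \<in> set F" using Suc ij by simp
        then have "fst (F ! i') \<subseteq> X - V" by (rule sub)
        then show ?thesis using 0 Suc by auto
      next
        case (Suc j')
        then show ?thesis using ofD2[OF OF, of i' j'] \<open>i = Suc i'\<close> ij by simp
      qed
    qed
  qed
qed




lemma RT_sub: "RT V \<subseteq> V \<times> Pow (Pow V)"
  unfolding RT_def rooted_tree_def using graph_sub tree_graph by fastforce

lemma DT_sub: "DT V \<subseteq> V \<times> V \<times> Pow (Pow V)"
  unfolding DT_def rooted_tree_def using graph_sub tree_graph by fastforce

lemma RT_fin: "finite V \<Longrightarrow> finite (RT V)"
  using RT_sub finite_subset by (metis finite_Pow_iff finite_SigmaI)

lemma DT_fin: "finite V \<Longrightarrow> finite (DT V)"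
  using DT_sub finite_subset by (metis finite_Pow_iff finite_SigmaI)

definition cons_f :: "'a set \<times> ('a \<times> 'a set set) \<times> ('a set \<times> 'a \<times> 'a set set) list \<Rightarrow> ('a set \<times> 'a \<times> 'a set set) list" where
  "cons_f = (\<lambda>(V,(r,E),F). (V,r,E)#F)"

lemma OF_bij:
  assumes X: "X \<noteq> {}"
  shows "bij_betw cons_f (SIGMA V:{V. V \<subseteq> X \<and> V \<noteq> {}}. RT V \<times> ordered_forests (X - V)) (ordered_forests X)"
  unfolding bij_betw_def
proof
  show "inj_on cons_f (SIGMA V:{V. V \<subseteq> X \<and> V \<noteq> {}}. RT V \<times> ordered_forests (X - V))"
  proof (rule inj_onI)
    fix s s' assume "cons_f s = cons_f s'"
    moreover obtain V r E F where "s = (V,(r,E),F)" by (cases s) auto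
    moreover obtain V' r' E' F' where "s' = (V',(r',E'),F')" by (cases s') auto
    ultimately show "s = s'" unfolding cons_f_def by simp
  qed
next
  show "cons_f ` (SIGMA V:{V. V \<subseteq> X \<and> V \<noteq> {}}. RT V \<times> ordered_forests (X - V)) = ordered_forests X"
  proof (intro equalityI subsetI)
    fix z assume "z \<in> cons_f ` (SIGMA V:{V. V \<subseteq> X \<and> V \<noteq> {}}. RT V \<times> ordered_forests (X - V))"
    then obtain s where s: "s \<in> (SIGMA V:{V. V \<subseteq> X \<and> V \<noteq> {}}. RT V \<times> ordered_forests (X - V))"
      and z: "z = cons_f s" by blast
    obtain V r E F where sd: "s = (V,(r,E),F)" by (cases s) auto
    have "rooted_tree V r E" "V \<subseteq> X" "ordered_forest (X - V) F"
      using s unfolding sd RT_def ordered_forests_def by auto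
    then show "z \<in> ordered_forests X" unfolding z sd cons_f_def ordered_forests_def
      by (simp add: of_cons)
  next
    fix z assume "z \<in> ordered_forests X"
    then have z: "ordered_forest X z" unfolding ordered_forests_def by simp
    have "z \<noteq> []"
    proof
      assume "z = []"
      then show False using z X by (simp add: of_nil)
    qed
    then obtain T F where zT: "z = T#F" by (cases z) auto
    obtain V r E where "T = (V,r,E)" by (cases T) auto
    then have zd: "z = (V,r,E)#F" using zT by simp
    have H: "rooted_tree V r E" "V \<subseteq> X" "ordered_forest (X - V) F" using z unfolding zd by (simp_all add: of_cons)
    have "V \<noteq> {}" using rooted_tree_ne[OF H(1)] .
    then have "(V,(r,E),F) \<in> (SIGMA V:{V. V \<subseteq> X \<and> V \<noteq> {}}. RT V \<times> ordered_forests (X - V))"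
      using H unfolding RT_def ordered_forests_def by simp
    moreover have "z = cons_f (V,(r,E),F)" unfolding zd cons_f_def by simp
    ultimately show "z \<in> cons_f ` (SIGMA V:{V. V \<subseteq> X \<and> V \<noteq> {}}. RT V \<times> ordered_forests (X - V))"
      by (rule rev_image_eqI)
  qed
qed

lemma OF_empty: "ordered_forests {} = {[]}"
proof -
  have "ordered_forest {} F \<longleftrightarrow> F = []" for F
  proof (cases F)
    case Nil then show ?thesis by (simp add: of_nil)
  next
    case (Cons T F')
    obtain V r E where "T = (V,r,E)" by (cases T) auto
    then show ?thesis using Cons by (auto simp: of_cons dest: rooted_tree_ne)
  qed
  then show ?thesis unfolding ordered_forests_def by auto
qed


lemma DT_card:
  assumes fin: "finite X"
  shows "card (DT X) = card (RT X) + (\<Sum>V\<in>{V. V \<subseteq> X \<and> V \<noteq> {} \<and> V \<noteq> X}. card (RT V) * card (DT (X - V)))"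
proof -
  define D0 where "D0 = (\<lambda>(r,E). (r,r,E)) ` RT X"
  define D1 where "D1 = {(r,p,E). rooted_tree X r E \<and> p \<in> X \<and> r \<noteq> p}"
  define I' where "I' = {V. V \<subseteq> X \<and> V \<noteq> {} \<and> V \<noteq> X}"
  have DT: "DT X = D0 \<union> D1"
  proof (intro equalityI subsetI)
    fix z assume "z \<in> DT X"
    then obtain r p E where zd: "z = (r,p,E)" and rt: "rooted_tree X r E" and p: "p \<in> X"
      unfolding DT_def by auto
    show "z \<in> D0 \<union> D1"
    proof (cases "r = p")
      case True
      have "(r,E) \<in> RT X" using rt unfolding RT_def by simp
      then have "(\<lambda>(r,E). (r,r,E)) (r,E) \<in> D0" unfolding D0_def by (rule imageI)
      then show ?thesis using True zd by simp
    next
      case False then show ?thesis unfolding D1_def zd using rt p by simp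
    qed
  next
    fix z assume "z \<in> D0 \<union> D1"
    then show "z \<in> DT X"
    proof
      assume "z \<in> D0"
      then obtain r E where "(r,E) \<in> RT X" "z = (r,r,E)" unfolding D0_def by auto
      then show ?thesis unfolding DT_def RT_def rooted_tree_def by simp
    next
      assume "z \<in> D1"
      then show ?thesis unfolding DT_def D1_def by auto
    qed
  qed
  have dis: "D0 \<inter> D1 = {}" unfolding D0_def D1_def by (auto simp: image_iff)
  have fD: "finite (DT X)" using DT_fin[OF fin] .
  have f0: "finite D0" and f1: "finite D1" using fD unfolding DT by auto
  have c0: "card D0 = card (RT X)" unfolding D0_def
    by (rule card_image) (auto simp: inj_on_def)
  have "bij_betw J (SIGMA V:I'. RT V \<times> DT (X - V)) D1"
    unfolding bij_betw_def I'_def D1_def by (simp add: J_inj J_image)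
  then have "card D1 = card (SIGMA V:I'. RT V \<times> DT (X - V))" by (rule bij_betw_same_card[symmetric])
  also have "\<dots> = (\<Sum>V\<in>I'. card (RT V \<times> DT (X - V)))"
  proof (rule card_SigmaI)
    show "finite I'" unfolding I'_def using fin by (simp add: finite_subset)
    show "\<forall>V\<in>I'. finite (RT V \<times> DT (X - V))" unfolding I'_def
      using fin by (auto intro!: RT_fin DT_fin finite_subset[OF _ fin])
  qed
  also have "\<dots> = (\<Sum>V\<in>I'. card (RT V) * card (DT (X - V)))" by (simp add: card_cartesian_product)
  finally have c1: "card D1 = \<dots>" .
  show ?thesis unfolding DT card_Un_disjoint[OF f0 f1 dis] c0 c1 I'_def ..
qed


lemma main_count:
  "finite X \<Longrightarrow> finite (ordered_forests X) \<and> (X \<noteq> {} \<longrightarrow> card (ordered_forests X) = card (DT X))"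
proof (induction "card X" arbitrary: X rule: less_induct)
  case less
  show ?case
  proof (cases "X = {}")
    case True then show ?thesis by (simp add: OF_empty)
  next
    case False
    define I where "I = {V. V \<subseteq> X \<and> V \<noteq> {}}"
    define I' where "I' = {V. V \<subseteq> X \<and> V \<noteq> {} \<and> V \<noteq> X}"
    have IH: "finite (ordered_forests (X - V)) \<and> (X - V \<noteq> {} \<longrightarrow> card (ordered_forests (X - V)) = card (DT (X - V)))"
      if "V \<in> I" for V
    proof (rule less.hyps)
      have "V \<subseteq> X" "V \<noteq> {}" using that unfolding I_def by auto
      then have "X - V \<subset> X" by blast
      then show "card (X - V) < card X" using less.prems by (simp add: psubset_card_mono)
      show "finite (X - V)" using less.prems by simp
    qed
    have fI: "finite I" unfolding I_def using less.prems by (simp add: finite_subset)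
    have fB: "\<forall>V\<in>I. finite (RT V \<times> ordered_forests (X - V))"
    proof
      fix V assume V: "V \<in> I"
      then have "finite V" unfolding I_def using less.prems finite_subset by blast
      then have "finite (RT V)" by (rule RT_fin)
      moreover have "finite (ordered_forests (X - V))" using IH[OF V] by blast
      ultimately show "finite (RT V \<times> ordered_forests (X - V))" by (rule finite_cartesian_product)
    qed
    have bij: "bij_betw cons_f (SIGMA V:I. RT V \<times> ordered_forests (X - V)) (ordered_forests X)"
      using OF_bij[OF False] unfolding I_def .
    have fS: "finite (SIGMA V:I. RT V \<times> ordered_forests (X - V))" using fI fB by blast
    have finOF: "finite (ordered_forests X)" using bij_betw_finite[OF bij] fS by blast
    have "card (ordered_forests X) = card (SIGMA V:I. RT V \<times> ordered_forests (X - V))"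
      using bij_betw_same_card[OF bij] by simp
    also have "\<dots> = (\<Sum>V\<in>I. card (RT V \<times> ordered_forests (X - V)))" using fI fB by (rule card_SigmaI)
    also have "\<dots> = (\<Sum>V\<in>I. card (RT V) * card (ordered_forests (X - V)))" by (simp add: card_cartesian_product)
    also have "I = insert X I'" unfolding I_def I'_def using False by auto
    also have "(\<Sum>V\<in>insert X I'. card (RT V) * card (ordered_forests (X - V)))
        = card (RT X) * card (ordered_forests (X - X)) + (\<Sum>V\<in>I'. card (RT V) * card (ordered_forests (X - V)))"
    proof (rule sum.insert)
      show "finite I'" unfolding I'_def using less.prems by (simp add: finite_subset)
      show "X \<notin> I'" unfolding I'_def by simp
    qed
    also have "(\<Sum>V\<in>I'. card (RT V) * card (ordered_forests (X - V))) = (\<Sum>V\<in>I'. card (RT V) * card (DT (X - V)))"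
    proof (rule sum.cong)
      fix V assume V: "V \<in> I'"
      then have "V \<in> I" "X - V \<noteq> {}" unfolding I_def I'_def by auto
      then show "card (RT V) * card (ordered_forests (X - V)) = card (RT V) * card (DT (X - V))"
        using IH by simp
    qed simp
    also have "card (RT X) * card (ordered_forests (X - X)) = card (RT X)" by (simp add: OF_empty)
    finally have "card (ordered_forests X) = card (DT X)"
      using DT_card[OF less.prems] unfolding I'_def by simp
    then show ?thesis using finOF by simp
  qed
qed




lemma RTL_single: "rooted_trees_leaf {a} a = {(a, {})}"
proof (intro equalityI subsetI)
  fix z assume "z \<in> rooted_trees_leaf {a} a"
  then obtain r E where zd: "z = (r,E)" and rt: "rooted_tree {a} r E"
    unfolding rooted_trees_leaf_def by auto
  have r: "r = a" using rt unfolding rooted_tree_def by simp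
  have "E = {}"
  proof (rule ccontr)
    assume "E \<noteq> {}"
    then obtain f where "f \<in> E" by blast
    then show False using graph_edge[OF tree_graph[OF conjunct1[OF rt[unfolded rooted_tree_def]]]] by blast
  qed
  then show "z \<in> {(a, {})}" using zd r by simp
next
  fix z assume "z \<in> {(a, {}::'a set set)}"
  then have zd: "z = (a, {})" by simp
  have "rooted_tree {a} a {}" unfolding rooted_tree_def using single_tree by simp
  moreover have "is_leaf {a} a {} a" unfolding is_leaf_def is_child_def adj_def by simp
  ultimately show "z \<in> rooted_trees_leaf {a} a" unfolding zd rooted_trees_leaf_def by simp
qed

theorem lemma2p2:
  fixes n :: nat and A :: "nat set"
  assumes "A \<subseteq> {1..n}" and "A \<noteq> {}"
  shows "\<exists>\<rho>. bij_betw \<rho> (rooted_trees_leaf A (Max A)) (ordered_forests (A - {Max A}))"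
proof -
  have fin: "finite A" using assms(1) finite_subset by blast
  define a where "a = Max A"
  have a: "a \<in> A" unfolding a_def using fin assms(2) by simp
  show ?thesis
  proof (cases "A - {a} = {}")
    case True
    then have A1: "A = {a}" using a by blast
    have "rooted_trees_leaf A a = {(a, {})}" unfolding A1 by (rule RTL_single)
    moreover have "ordered_forests (A - {a}) = {[]}" unfolding True by (rule OF_empty)
    ultimately show ?thesis unfolding a_def[symmetric]
      by (intro finite_same_card_bij) simp_all
  next
    case False
    let ?K = "\<lambda>(r,p,E). (r, E \<union> {{p,a}})"
    have bij: "bij_betw ?K (DT (A - {a})) (rooted_trees_leaf A a)"
      unfolding bij_betw_def
    proof
      show "inj_on ?K (DT (A - {a}))" using K_inj[OF a] .
      show "?K ` DT (A - {a}) = rooted_trees_leaf A a"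
        using K_into[OF a] K_surj[OF a False] by blast
    qed
    have fX: "finite (A - {a})" using fin by simp
    have fD: "finite (DT (A - {a}))" using DT_fin[OF fX] .
    have mc: "finite (ordered_forests (A - {a}))" "card (ordered_forests (A - {a})) = card (DT (A - {a}))"
      using main_count[OF fX] False by auto
    have "finite (rooted_trees_leaf A a)" using bij_betw_finite[OF bij] fD by blast
    moreover have "card (rooted_trees_leaf A a) = card (ordered_forests (A - {a}))"
      using bij_betw_same_card[OF bij] mc by simp
    ultimately show ?thesis unfolding a_def[symmetric] using mc(1) by (intro finite_same_card_bij)
  qed
qed


end
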